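(* Let $S,T$ be numberings of shape $\lambda\vdash n$, let $1\le i\le\ell(\lambda)-1$ and $1\le j\le\lambda_{i+1}$. Define \[ \pi_{i,j}^T(S)=\sum_{U\in\Xi_{i,j}(S)}\sigma_{U,T}\,a_U . \] Then $(-1)^j\pi_{i,j}^T(S)-\sigma_{S,T}\,a_S\in\ker\Psi^T$.
   Context: Permutations in $\mathfrak S_n$ act on $[n]$, products are compositions $(\sigma\tau)(k)=\sigma(\tau(k))$. A numbering of shape $\lambda\vdash n$ is a filling of the Young diagram of $\lambda$ (rows indexed top to bottom; $\ell(\lambda)$ = number of rows) with $1,\dots,n$, each exactly once. For $\pi\in\mathfrak S_n$, $\pi\cdot T$ replaces each entry $k$ by $\pi(k)$; $\sigma_{T,S}$ is the unique permutation with $\sigma_{T,S}\cdot T=S$. $R(T)$, $C(T)$ are the row and column groups; $a_T=\sum_{\rho\in R(T)}\rho$, $b_T=\sum_{\zeta\in C(T)}\operatorname{sgn}(\zeta)\zeta$. Let $\widetilde{\mathcal M}^T=a_T\,\mathbb C[\mathfrak S_n]$ (right submodule; note $\sigma_{U,T}a_U=a_T\sigma_{U,T}$), and $\Psi^T:\widetilde{\mathcal M}^T\to\mathbb C[\mathfrak S_n]$ the right-module homomorphism $a_Tx\mapsto b_Ta_Tx$. Let $J$ be the set of the first (leftmost) $j$ entries of row $i+1$ of $S$. The set $\Xi_{i,j}(S)$ consists of the numberings obtained from $S$, one for each $j$-element subset $B$ of the entries of row $i$ of $S$, by moving the entries of $J$ to the positions in row $i$ previously occupied by $B$ and the entries of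 $B$ to the positions in row $i+1$ previously occupied by $J$, preserving relative left-to-right order within each subset. *)

theory Defs
  imports Complex_Main "HOL-Combinatorics.Permutations"
begin

text \<open>Partitions: a partition lambda of n is a weakly decreasing list of positive
  naturals summing to n. Row r (1-based) has length lam ! (r - 1).\<close>
definition is_partition :: "nat list \<Rightarrow> nat \<Rightarrow> bool" where
  "is_partition lam n \<longleftrightarrow> sorted_wrt (\<ge>) lam \<and> 0 \<notin> set lam \<and> sum_list lam = n"

definition cells :: "nat list \<Rightarrow> (nat \<times> nat) set" where
  "cells lam = {(r, c). 1 \<le> r \<and> r \<le> length lam \<and> 1 \<le> c \<and> c \<le> lam ! (r - 1)}"

text \<open>A numbering of shape lam: a filling of the cells with 1..n, each exactly once
  (values outside the diagram are irrelevant).\<close>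
definition numbering :: "nat list \<Rightarrow> nat \<Rightarrow> (nat \<times> nat \<Rightarrow> nat) \<Rightarrow> bool" where
  "numbering lam n T \<longleftrightarrow> bij_betw T (cells lam) {1..n}"

definition Sym :: "nat \<Rightarrow> (nat \<Rightarrow> nat) set" where
  "Sym n = {p. p permutes {1..n}}"

definition sigma :: "nat \<Rightarrow> nat list \<Rightarrow> (nat \<times> nat \<Rightarrow> nat) \<Rightarrow> (nat \<times> nat \<Rightarrow> nat) \<Rightarrow> (nat \<Rightarrow> nat)" where
  "sigma n lam T S = (THE p. p permutes {1..n} \<and> (\<forall>c\<in>cells lam. p (T c) = S c))"

definition row_entries :: "nat list \<Rightarrow> (nat \<times> nat \<Rightarrow> nat) \<Rightarrow> nat \<Rightarrow> nat set" where
  "row_entries lam T r = {T c | c. c \<in> cells lam \<and> fst c = r}"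

definition col_entries :: "nat list \<Rightarrow> (nat \<times> nat \<Rightarrow> nat) \<Rightarrow> nat \<Rightarrow> nat set" where
  "col_entries lam T k = {T c | c. c \<in> cells lam \<and> snd c = k}"

definition row_group :: "nat \<Rightarrow> nat list \<Rightarrow> (nat \<times> nat \<Rightarrow> nat) \<Rightarrow> (nat \<Rightarrow> nat) set" where
  "row_group n lam T = {p \<in> Sym n. \<forall>r. p ` row_entries lam T r = row_entries lam T r}"

definition col_group :: "nat \<Rightarrow> nat list \<Rightarrow> (nat \<times> nat \<Rightarrow> nat) \<Rightarrow> (nat \<Rightarrow> nat) set" where
  "col_group n lam T = {p \<in> Sym n. \<forall>k. p ` col_entries lam T k = col_entries lam T k}"

text \<open>The group algebra C[S_n]: complex-valued functions on permutations supported on Sym n;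
  an element x corresponds to the formal sum of x g * g.\<close>
definition ga :: "nat \<Rightarrow> ((nat \<Rightarrow> nat) \<Rightarrow> complex) set" where
  "ga n = {x. \<forall>g. g \<notin> Sym n \<longrightarrow> x g = 0}"

definition ga_mult :: "nat \<Rightarrow> ((nat \<Rightarrow> nat) \<Rightarrow> complex) \<Rightarrow> ((nat \<Rightarrow> nat) \<Rightarrow> complex) \<Rightarrow> ((nat \<Rightarrow> nat) \<Rightarrow> complex)" where
  "ga_mult n x y = (\<lambda>g. if g \<in> Sym n then (\<Sum>h\<in>Sym n. x h * y (inv h \<circ> g)) else 0)"

definition delta :: "(nat \<Rightarrow> nat) \<Rightarrow> ((nat \<Rightarrow> nat) \<Rightarrow> complex)" where
  "delta s = (\<lambda>g. if g = s then 1 else 0)"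

definition a_elt :: "nat \<Rightarrow> nat list \<Rightarrow> (nat \<times> nat \<Rightarrow> nat) \<Rightarrow> ((nat \<Rightarrow> nat) \<Rightarrow> complex)" where
  "a_elt n lam T = (\<lambda>g. if g \<in> row_group n lam T then 1 else 0)"

definition b_elt :: "nat \<Rightarrow> nat list \<Rightarrow> (nat \<times> nat \<Rightarrow> nat) \<Rightarrow> ((nat \<Rightarrow> nat) \<Rightarrow> complex)" where
  "b_elt n lam T = (\<lambda>g. if g \<in> col_group n lam T then of_int (sign g) else 0)"

definition Mmod :: "nat \<Rightarrow> nat list \<Rightarrow> (nat \<times> nat \<Rightarrow> nat) \<Rightarrow> ((nat \<Rightarrow> nat) \<Rightarrow> complex) set" where
  "Mmod n lam T = {ga_mult n (a_elt n lam T) x | x. x \<in> ga n}"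

definition Psi :: "nat \<Rightarrow> nat list \<Rightarrow> (nat \<times> nat \<Rightarrow> nat) \<Rightarrow> ((nat \<Rightarrow> nat) \<Rightarrow> complex) \<Rightarrow> ((nat \<Rightarrow> nat) \<Rightarrow> complex)" where
  "Psi n lam T y = ga_mult n (b_elt n lam T) y"

definition ker_Psi :: "nat \<Rightarrow> nat list \<Rightarrow> (nat \<times> nat \<Rightarrow> nat) \<Rightarrow> ((nat \<Rightarrow> nat) \<Rightarrow> complex) set" where
  "ker_Psi n lam T = {y \<in> Mmod n lam T. Psi n lam T y = (\<lambda>_. 0)}"

definition xi_move :: "(nat \<times> nat \<Rightarrow> nat) \<Rightarrow> nat \<Rightarrow> nat set \<Rightarrow> (nat \<times> nat \<Rightarrow> nat)" where
  "xi_move S i Bc = (\<lambda>(r, c).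
     if r = i \<and> c \<in> Bc then S (i + 1, card {b \<in> Bc. b < c} + 1)
     else if r = i + 1 \<and> 1 \<le> c \<and> c \<le> card Bc then S (i, sorted_list_of_set Bc ! (c - 1))
     else S (r, c))"

definition Xi :: "nat list \<Rightarrow> nat \<Rightarrow> nat \<Rightarrow> (nat \<times> nat \<Rightarrow> nat) \<Rightarrow> (nat \<times> nat \<Rightarrow> nat) set" where
  "Xi lam i j S = (\<lambda>Bc. xi_move S i Bc) ` {Bc. Bc \<subseteq> {1..lam ! (i - 1)} \<and> card Bc = j}"

definition piT :: "nat \<Rightarrow> nat list \<Rightarrow> (nat \<times> nat \<Rightarrow> nat) \<Rightarrow> nat \<Rightarrow> nat \<Rightarrow> (nat \<times> nat \<Rightarrow> nat) \<Rightarrow> ((nat \<Rightarrow> nat) \<Rightarrow> complex)" where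
  "piT n lam T i j S = (\<lambda>g. \<Sum>U\<in>Xi lam i j S. ga_mult n (delta (sigma n lam U T)) (a_elt n lam U) g)"

end

theory Submission
  imports Defs
begin

definition pos :: "nat list \<Rightarrow> (nat \<times> nat \<Rightarrow> nat) \<Rightarrow> nat \<Rightarrow> nat \<times> nat" where
  "pos lam T x = inv_into (cells lam) T x"

lemma finite_cells: "finite (cells lam)"
proof -
  have "cells lam \<subseteq> {1..length lam} \<times> {1..Max (set lam)}"
    by (auto simp: cells_def intro!: order.trans[OF _ Max_ge])
  then show ?thesis by (rule finite_subset) auto
qed

lemma pos_in:
  assumes "numbering lam n T" "x \<in> {1..n}"
  shows "pos lam T x \<in> cells lam" "T (pos lam T x) = x"
  using assms unfolding numbering_def pos_def
  by (auto intro: inv_into_into bij_betw_inv_into_right simp: bij_betw_def)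

lemma pos_T:
  assumes "numbering lam n T" "c \<in> cells lam"
  shows "pos lam T (T c) = c"
  using assms unfolding numbering_def pos_def by (simp add: bij_betw_inv_into_left)

lemma T_in:
  assumes "numbering lam n T" "c \<in> cells lam"
  shows "T c \<in> {1..n}"
  using assms unfolding numbering_def bij_betw_def by auto

lemma row_entries_eq:
  assumes "numbering lam n T"
  shows "row_entries lam T r = {x \<in> {1..n}. fst (pos lam T x) = r}"
  unfolding row_entries_def
proof (intro set_eqI iffI)
  fix x assume "x \<in> {T c |c. c \<in> cells lam \<and> fst c = r}"
  then obtain c where c: "x = T c" "c \<in> cells lam" "fst c = r" by blast
  then show "x \<in> {x \<in> {1..n}. fst (pos lam T x) = r}"
    using pos_T[OF assms c(2)] T_in[OF assms c(2)] by simp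
next
  fix x assume x: "x \<in> {x \<in> {1..n}. fst (pos lam T x) = r}"
  then have "x \<in> {1..n}" by simp
  note pp = pos_in[OF assms this]
  show "x \<in> {T c |c. c \<in> cells lam \<and> fst c = r}"
    using pp x by (intro CollectI exI[of _ "pos lam T x"]) simp
qed

lemma col_entries_eq:
  assumes "numbering lam n T"
  shows "col_entries lam T r = {x \<in> {1..n}. snd (pos lam T x) = r}"
  unfolding col_entries_def
proof (intro set_eqI iffI)
  fix x assume "x \<in> {T c |c. c \<in> cells lam \<and> snd c = r}"
  then obtain c where c: "x = T c" "c \<in> cells lam" "snd c = r" by blast
  then show "x \<in> {x \<in> {1..n}. snd (pos lam T x) = r}"
    using pos_T[OF assms c(2)] T_in[OF assms c(2)] by simp
next
  fix x assume x: "x \<in> {x \<in> {1..n}. snd (pos lam T x) = r}"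
  then have "x \<in> {1..n}" by simp
  note pp = pos_in[OF assms this]
  show "x \<in> {T c |c. c \<in> cells lam \<and> snd c = r}"
    using pp x by (intro CollectI exI[of _ "pos lam T x"]) simp
qed

lemma group_pres_iff:
  assumes p: "p permutes {1..n}" and F: "\<And>r. F r = {x \<in> {1..n}. f x = r}"
  shows "(\<forall>r. p ` F r = F r) \<longleftrightarrow> (\<forall>x\<in>{1..n}. f (p x) = f x)"
proof
  assume H: "\<forall>r. p ` F r = F r"
  show "\<forall>x\<in>{1..n}. f (p x) = f x"
  proof
    fix x assume x: "x \<in> {1..n}"
    then have "x \<in> F (f x)" using F by auto
    then have "p x \<in> F (f x)" using H by blast
    then show "f (p x) = f x" using F by auto
  qed
next
  assume H: "\<forall>x\<in>{1..n}. f (p x) = f x"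
  show "\<forall>r. p ` F r = F r"
  proof
    fix r
    show "p ` F r = F r"
    proof
      have pin: "\<And>x. x \<in> {1..n} \<Longrightarrow> p x \<in> {1..n}" by (rule permutes_in_image[OF p, THEN iffD2])
      show "p ` F r \<subseteq> F r" using H F pin by fastforce
      show "F r \<subseteq> p ` F r"
      proof
        fix y assume y: "y \<in> F r"
        then have yn: "y \<in> {1..n}" using F by auto
        have iy: "inv p y \<in> {1..n}" using permutes_in_image[OF permutes_inv[OF p]] yn by blast
        have "p (inv p y) = y" using p by (simp add: permutes_inverses(1))
        then have "f (inv p y) = r" using H iy y F by force
        then show "y \<in> p ` F r" using iy F \<open>p (inv p y) = y\<close> by (metis (mono_tags, lifting) image_eqI mem_Collect_eq)
      qed
    qed
  qed
qed

lemma row_group_iff: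
  assumes "numbering lam n T"
  shows "p \<in> row_group n lam T \<longleftrightarrow> p permutes {1..n} \<and> (\<forall>x\<in>{1..n}. fst (pos lam T (p x)) = fst (pos lam T x))"
  unfolding row_group_def Sym_def
  using group_pres_iff[of p n "row_entries lam T", OF _ row_entries_eq[OF assms]] by auto

lemma col_group_iff:
  assumes "numbering lam n T"
  shows "p \<in> col_group n lam T \<longleftrightarrow> p permutes {1..n} \<and> (\<forall>x\<in>{1..n}. snd (pos lam T (p x)) = snd (pos lam T x))"
  unfolding col_group_def Sym_def
  using group_pres_iff[of p n "col_entries lam T", OF _ col_entries_eq[OF assms]] by auto

lemma sigma_props:
  assumes U: "numbering lam n U" and T: "numbering lam n T"
  shows "sigma n lam U T permutes {1..n} \<and> (\<forall>c\<in>cells lam. sigma n lam U T (U c) = T c)"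
proof -
  define p where "p = (\<lambda>x. if x \<in> {1..n} then T (pos lam U x) else x)"
  have bij: "bij_betw (T \<circ> pos lam U) {1..n} {1..n}"
    using U T unfolding numbering_def pos_def
    by (meson bij_betw_inv_into bij_betw_trans)
  have "bij_betw p {1..n} {1..n}"
    using bij by (rule bij_betw_cong[THEN iffD1, rotated]) (auto simp: p_def)
  then have pp: "p permutes {1..n}"
    by (rule bij_imp_permutes) (auto simp: p_def)
  have pc: "\<forall>c\<in>cells lam. p (U c) = T c"
    using T_in[OF U] pos_T[OF U] by (auto simp: p_def)
  have uniq: "q = p" if "q permutes {1..n} \<and> (\<forall>c\<in>cells lam. q (U c) = T c)" for q
  proof
    fix x show "q x = p x"
    proof (cases "x \<in> {1..n}")
      case True
      then show ?thesis using that pc pos_in[OF U True] by metis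
    next
      case False
      then show ?thesis using that pp by (metis permutes_not_in)
    qed
  qed
  have "sigma n lam U T = p"
    unfolding sigma_def
  proof (rule the_equality)
    show "p permutes {1..n} \<and> (\<forall>c\<in>cells lam. p (U c) = T c)" using pp pc by blast
  next
    fix q assume "q permutes {1..n} \<and> (\<forall>c\<in>cells lam. q (U c) = T c)"
    then show "q = p" by (rule uniq)
  qed
  then show ?thesis using pp pc by simp
qed


definition rk :: "nat set \<Rightarrow> nat \<Rightarrow> nat" where "rk B c = card {b\<in>B. b < c}"

lemma sorted_rank:
  assumes "finite B" "k < card B"
  shows "rk B (sorted_list_of_set B ! k) = k" "sorted_list_of_set B ! k \<in> B"
proof -
  let ?xs = "sorted_list_of_set B"
  have st: "sorted_wrt (<) ?xs" by (simp add: strict_sorted_list_of_set)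
  have len: "length ?xs = card B" by (simp add: length_sorted_list_of_set)
  have set: "set ?xs = B" using assms by simp
  have kl: "k < length ?xs" using len assms by simp
  show "sorted_list_of_set B ! k \<in> B" using set kl nth_mem by blast
  have "{b\<in>B. b < ?xs!k} = set (take k ?xs)"
  proof (intro set_eqI iffI)
    fix b assume "b \<in> {b\<in>B. b < ?xs!k}"
    then have "b \<in> set ?xs" "b < ?xs!k" using set by auto
    then obtain m where m: "m < length ?xs" "b = ?xs!m" "b < ?xs!k" by (auto simp: in_set_conv_nth)
    have "m < k"
    proof (rule ccontr)
      assume "\<not> m<k"
      then have "k \<le> m" by simp
      then have "?xs!k \<le> ?xs!m" using st m(1) sorted_nth_mono strict_sorted_imp_sorted by blast
      then show False using m by simp
    qed
    then show "b \<in> set (take k ?xs)" using m by (auto simp: in_set_conv_nth intro!: exI[of _ m])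
  next
    fix b assume "b \<in> set (take k ?xs)"
    then obtain m where m: "m < k" "b = ?xs!m" using kl by (auto simp: in_set_conv_nth)
    have "b \<in> B" using m kl set nth_mem by (metis order.strict_trans)
    moreover have "b < ?xs!k" using m kl st by (simp add: sorted_wrt_nth_less)
    ultimately show "b \<in> {b\<in>B. b < ?xs!k}" by simp
  qed
  moreover have "card (set (take k ?xs)) = k"
    using kl by (simp add: distinct_card distinct_take)
  ultimately show "rk B (sorted_list_of_set B ! k) = k" by (simp add: rk_def)
qed

lemma rank_sorted:
  assumes "finite B" "c \<in> B"
  shows "rk B c < card B" "sorted_list_of_set B ! (rk B c) = c"
proof -
  let ?xs = "sorted_list_of_set B"
  have "c \<in> set ?xs" using assms by simp
  then obtain m where m: "m < length ?xs" "c = ?xs!m" by (auto simp: in_set_conv_nth)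
  have mc: "m < card B" using m by (simp add: length_sorted_list_of_set)
  have "rk B c = m" using sorted_rank(1)[OF assms(1) mc] m by simp
  then show "rk B c < card B" "sorted_list_of_set B ! (rk B c) = c" using mc m by auto
qed

definition phi :: "nat \<Rightarrow> nat set \<Rightarrow> nat \<times> nat \<Rightarrow> nat \<times> nat" where
  "phi i B = (\<lambda>(r, c). if r = i \<and> c \<in> B then (i + 1, rk B c + 1)
     else if r = i + 1 \<and> 1 \<le> c \<and> c \<le> card B then (i, sorted_list_of_set B ! (c - 1))
     else (r, c))"

lemma xi_move_phi: "xi_move S i B = S \<circ> phi i B"
  by (auto simp: xi_move_def phi_def rk_def fun_eq_iff)

lemma fst_phi: "fst (phi i B (r, c)) = (if r = i \<and> c \<in> B then i + 1
     else if r = i + 1 \<and> 1 \<le> c \<and> c \<le> card B then i else r)"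
  by (simp add: phi_def)

lemma phi_cells:
  assumes B: "B \<subseteq> {1..lam!(i-1)}" "card B = j" and ij: "1 \<le> i" "i < length lam" "j \<le> lam!i"
    and c: "c \<in> cells lam"
  shows "phi i B c \<in> cells lam \<and> phi i B (phi i B c) = c"
proof -
  have fB: "finite B" using B(1) finite_subset by blast
  obtain r col where rc: "c = (r, col)" by force
  show ?thesis
  proof (cases "r = i \<and> col \<in> B")
    case True
    note rs = rank_sorted[OF fB, of col]
    have p1: "phi i B c = (i+1, rk B col + 1)" using True rc by (simp add: phi_def)
    have "(i+1, rk B col + 1) \<in> cells lam" using rs True B ij by (auto simp: cells_def)
    moreover have "phi i B (i+1, rk B col + 1) = c" using rs True rc B by (simp add: phi_def)
    ultimately show ?thesis using p1 by simp
  next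
    case False
    show ?thesis
    proof (cases "r = i + 1 \<and> 1 \<le> col \<and> col \<le> card B")
      case True2: True
      have k: "col - 1 < card B" using True2 by arith
      note sr = sorted_rank[OF fB k]
      have p1: "phi i B c = (i, sorted_list_of_set B ! (col - 1))" using True2 rc by (simp add: phi_def)
      have "(i, sorted_list_of_set B ! (col - 1)) \<in> cells lam" using sr B ij by (auto simp: cells_def)
      moreover have "phi i B (i, sorted_list_of_set B ! (col - 1)) = c" using sr True2 rc by (simp add: phi_def)
      ultimately show ?thesis using p1 by simp
    next
      case False2: False
      then have "phi i B c = c" using False rc by (auto simp: phi_def)
      then show ?thesis using c by simp
    qed
  qed
qed

lemma xi_numbering:
  assumes B: "B \<subseteq> {1..lam!(i-1)}" "card B = j" and ij: "1 \<le> i" "i < length lam" "j \<le> lam!i"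
    and S: "numbering lam n S"
  shows "numbering lam n (xi_move S i B)"
    and "\<And>x. x \<in> {1..n} \<Longrightarrow> pos lam (xi_move S i B) x = phi i B (pos lam S x)"
proof -
  note pc = phi_cells[OF B ij]
  have "bij_betw (phi i B) (cells lam) (cells lam)"
    by (rule bij_betw_byWitness[of _ "phi i B"]) (use pc in auto)
  then show U: "numbering lam n (xi_move S i B)"
    using S unfolding numbering_def xi_move_phi by (rule bij_betw_trans)
  fix x assume x: "x \<in> {1..n}"
  note ps = pos_in[OF S x]
  have "xi_move S i B (phi i B (pos lam S x)) = x"
    using pc[OF ps(1)] ps(2) by (simp add: xi_move_phi)
  then show "pos lam (xi_move S i B) x = phi i B (pos lam S x)"
    using pos_T[OF U conjunct1[OF pc[OF ps(1)]]] by simp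
qed

lemma finite_Sym: "finite (Sym n)"
  unfolding Sym_def by (simp add: finite_permutations)

lemma ga_mult_delta_left:
  assumes "s \<in> Sym n"
  shows "ga_mult n (delta s) y g = (if g \<in> Sym n then y (inv s \<circ> g) else 0)"
proof -
  have "(\<Sum>h\<in>Sym n. delta s h * y (inv h \<circ> g)) = (\<Sum>h\<in>Sym n. if h = s then y (inv s \<circ> g) else 0)"
    by (rule sum.cong) (auto simp: delta_def)
  also have "\<dots> = y (inv s \<circ> g)" using assms finite_Sym by simp
  finally show ?thesis by (simp add: ga_mult_def)
qed

lemma ga_mult_delta_right:
  assumes s: "s \<in> Sym n"
  shows "ga_mult n y (delta s) g = (if g \<in> Sym n then y (g \<circ> inv s) else 0)"
proof (cases "g \<in> Sym n")
  case True
  have sp: "s permutes {1..n}" and gp: "g permutes {1..n}" using s True by (auto simp: Sym_def)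
  have gs: "g \<circ> inv s \<in> Sym n" using sp gp by (simp add: Sym_def permutes_compose permutes_inv)
  have eq: "inv h \<circ> g = s \<longleftrightarrow> h = g \<circ> inv s" if "h \<in> Sym n" for h
  proof -
    have hp: "h permutes {1..n}" using that by (simp add: Sym_def)
    have a: "h \<circ> inv h = id" "inv h \<circ> h = id" using permutes_inv_o[OF hp] by auto
    have b: "s \<circ> inv s = id" "inv s \<circ> s = id" using permutes_inv_o[OF sp] by auto
    show ?thesis
    proof
      assume E: "inv h \<circ> g = s"
      have "g = (h \<circ> inv h) \<circ> g" using a by simp
      also have "\<dots> = h \<circ> s" using E by (simp add: comp_assoc)
      finally have "g \<circ> inv s = h \<circ> (s \<circ> inv s)" by (simp add: comp_assoc)
      then show "h = g \<circ> inv s" using b by simp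
    next
      assume "h = g \<circ> inv s"
      then have "inv h \<circ> g = inv h \<circ> (h \<circ> s)" using b by (simp add: comp_assoc)
      then show "inv h \<circ> g = s" using a by (simp add: comp_assoc[symmetric])
    qed
  qed
  have "(\<Sum>h\<in>Sym n. y h * delta s (inv h \<circ> g)) = (\<Sum>h\<in>Sym n. if h = g \<circ> inv s then y (g \<circ> inv s) else 0)"
    by (rule sum.cong) (auto simp: delta_def eq)
  also have "\<dots> = y (g \<circ> inv s)" using gs finite_Sym by simp
  finally show ?thesis using True by (simp add: ga_mult_def)
qed (simp add: ga_mult_def)

lemma sigma_in_Sym:
  assumes "numbering lam n U" "numbering lam n T"
  shows "sigma n lam U T \<in> Sym n"
  using sigma_props[OF assms] by (simp add: Sym_def)

lemma rowof_sigma: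
  assumes U: "numbering lam n U" and T: "numbering lam n T"
  shows "\<And>x. x \<in> {1..n} \<Longrightarrow> fst (pos lam T (sigma n lam U T x)) = fst (pos lam U x)"
    and "\<And>y. y \<in> {1..n} \<Longrightarrow> fst (pos lam U (inv (sigma n lam U T) y)) = fst (pos lam T y)"
proof -
  note sp = sigma_props[OF U T]
  show 1: "fst (pos lam T (sigma n lam U T x)) = fst (pos lam U x)" if x: "x \<in> {1..n}" for x
  proof -
    note ps = pos_in[OF U x]
    have "sigma n lam U T x = T (pos lam U x)" using sp ps by metis
    then show ?thesis using pos_T[OF T ps(1)] by simp
  qed
  fix y assume y: "y \<in> {1..n}"
  have iy: "inv (sigma n lam U T) y \<in> {1..n}"
    using permutes_in_image[OF permutes_inv[OF conjunct1[OF sp]]] y by blast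
  have "sigma n lam U T (inv (sigma n lam U T) y) = y"
    using conjunct1[OF sp] by (simp add: permutes_inverses(1))
  then show "fst (pos lam U (inv (sigma n lam U T) y)) = fst (pos lam T y)"
    using 1[OF iy] by simp
qed

definition rowmatch :: "nat list \<Rightarrow> nat \<Rightarrow> (nat \<Rightarrow> nat) \<Rightarrow> (nat \<times> nat \<Rightarrow> nat) \<Rightarrow> complex" where
  "rowmatch lam n t U = (if \<forall>x\<in>{1..n}. t x = fst (pos lam U x) then 1 else 0)"

lemma term_left:
  assumes U: "numbering lam n U" and T: "numbering lam n T" and g: "g \<in> Sym n"
  shows "ga_mult n (delta (sigma n lam U T)) (a_elt n lam U) g
     = rowmatch lam n (\<lambda>x. fst (pos lam T (g x))) U"
proof -
  let ?s = "sigma n lam U T"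
  have sp: "?s permutes {1..n}" using sigma_props[OF U T] by simp
  have gp: "g permutes {1..n}" using g by (simp add: Sym_def)
  have pp: "inv ?s \<circ> g permutes {1..n}" using sp gp by (simp add: permutes_compose permutes_inv)
  have gin: "\<And>y. y \<in> {1..n} \<Longrightarrow> g y \<in> {1..n}" using permutes_in_image[OF gp] by blast
  have "(inv ?s \<circ> g \<in> row_group n lam U) \<longleftrightarrow> (\<forall>x\<in>{1..n}. fst (pos lam T (g x)) = fst (pos lam U x))"
    using row_group_iff[OF U, of "inv ?s \<circ> g"] pp rowof_sigma(2)[OF U T gin] by auto
  then show ?thesis
    by (simp add: ga_mult_delta_left[OF sigma_in_Sym[OF U T]] g a_elt_def rowmatch_def)
qed

lemma term_right:
  assumes U: "numbering lam n U" and T: "numbering lam n T" and g: "g \<in> Sym n"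
  shows "ga_mult n (a_elt n lam T) (delta (sigma n lam U T)) g
     = rowmatch lam n (\<lambda>x. fst (pos lam T (g x))) U"
proof -
  let ?s = "sigma n lam U T"
  have sp: "?s permutes {1..n}" using sigma_props[OF U T] by simp
  have gp: "g permutes {1..n}" using g by (simp add: Sym_def)
  have pp: "g \<circ> inv ?s permutes {1..n}" using sp gp by (simp add: permutes_compose permutes_inv)
  have sin: "\<And>y. y \<in> {1..n} \<Longrightarrow> ?s y \<in> {1..n}" using permutes_in_image[OF sp] by blast
  have isin: "\<And>y. y \<in> {1..n} \<Longrightarrow> inv ?s y \<in> {1..n}" using permutes_in_image[OF permutes_inv[OF sp]] by blast
  have inv1: "\<And>x. inv ?s (?s x) = x" using sp by (simp add: permutes_inverses(2))
  have "(\<forall>y\<in>{1..n}. fst (pos lam T (g (inv ?s y))) = fst (pos lam T y))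
      \<longleftrightarrow> (\<forall>x\<in>{1..n}. fst (pos lam T (g x)) = fst (pos lam U x))"
  proof
    assume H: "\<forall>y\<in>{1..n}. fst (pos lam T (g (inv ?s y))) = fst (pos lam T y)"
    show "\<forall>x\<in>{1..n}. fst (pos lam T (g x)) = fst (pos lam U x)"
    proof
      fix x assume x: "x \<in> {1..n}"
      have "fst (pos lam T (g (inv ?s (?s x)))) = fst (pos lam T (?s x))" using H sin[OF x] by blast
      then show "fst (pos lam T (g x)) = fst (pos lam U x)" using inv1 rowof_sigma(1)[OF U T x] by simp
    qed
  next
    assume H: "\<forall>x\<in>{1..n}. fst (pos lam T (g x)) = fst (pos lam U x)"
    show "\<forall>y\<in>{1..n}. fst (pos lam T (g (inv ?s y))) = fst (pos lam T y)"
      using H isin rowof_sigma(2)[OF U T] by simp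
  qed
  then have "(g \<circ> inv ?s \<in> row_group n lam T) \<longleftrightarrow> (\<forall>x\<in>{1..n}. fst (pos lam T (g x)) = fst (pos lam U x))"
    using row_group_iff[OF T, of "g \<circ> inv ?s"] pp by auto
  then show ?thesis
    by (simp add: ga_mult_delta_right[OF sigma_in_Sym[OF U T]] g a_elt_def rowmatch_def)
qed


lemma col_group_comp:
  assumes T: "numbering lam n T" and p: "p \<in> col_group n lam T" and q: "q \<in> col_group n lam T"
  shows "p \<circ> q \<in> col_group n lam T"
proof -
  have pp: "p permutes {1..n}" "\<forall>x\<in>{1..n}. snd (pos lam T (p x)) = snd (pos lam T x)"
    using p col_group_iff[OF T] by auto
  have qq: "q permutes {1..n}" "\<forall>x\<in>{1..n}. snd (pos lam T (q x)) = snd (pos lam T x)"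
    using q col_group_iff[OF T] by auto
  have qin: "\<And>x. x \<in> {1..n} \<Longrightarrow> q x \<in> {1..n}" using permutes_in_image[OF qq(1)] by blast
  show ?thesis using pp qq qin col_group_iff[OF T] by (simp add: permutes_compose)
qed

lemma col_group_inv_col:
  assumes T: "numbering lam n T" and h: "h \<in> col_group n lam T" and y: "y \<in> {1..n}"
  shows "snd (pos lam T (inv h y)) = snd (pos lam T y)"
proof -
  have hh: "h permutes {1..n}" "\<forall>x\<in>{1..n}. snd (pos lam T (h x)) = snd (pos lam T x)"
    using h col_group_iff[OF T] by auto
  have iy: "inv h y \<in> {1..n}" using permutes_in_image[OF permutes_inv[OF hh(1)]] y by blast
  have "h (inv h y) = y" using hh(1) by (simp add: permutes_inverses(1))
  then show ?thesis using hh(2) iy by metis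
qed

lemma garnir_vanish:
  fixes Q :: "(nat \<Rightarrow> nat) \<Rightarrow> bool"
  assumes T: "numbering lam n T" and g: "g \<in> Sym n"
    and A: "A \<subseteq> {1..n}" and cardA: "card A > lam!(i-1)"
    and ij: "1 \<le> i" "i < length lam" "lam!i \<le> lam!(i-1)"
    and Qinv: "\<And>t a b. a \<in> A \<Longrightarrow> b \<in> A \<Longrightarrow> Q (\<lambda>x. t (transpose a b x)) = Q t"
    and Qrng: "\<And>t x. Q t \<Longrightarrow> x \<in> A \<Longrightarrow> t x = i \<or> t x = i + 1"
  shows "(\<Sum>h\<in>col_group n lam T. of_int (sign h) * (if Q (\<lambda>x. fst (pos lam T (inv h (g x)))) then 1 else 0)) = (0::complex)"
proof -
  let ?C = "col_group n lam T"
  define f where "f h = of_int (sign h) * (if Q (\<lambda>x. fst (pos lam T (inv h (g x)))) then 1 else (0::complex))" for h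
  have gp: "g permutes {1..n}" using g by (simp add: Sym_def)
  have gin: "\<And>x. x \<in> {1..n} \<Longrightarrow> g x \<in> {1..n}" using permutes_in_image[OF gp] by blast
  have ginj: "inj g" using gp permutes_inj by blast
  have hperm: "\<And>h. h \<in> ?C \<Longrightarrow> h permutes {1..n}" using col_group_iff[OF T] by blast
  show ?thesis
  proof (cases "\<exists>a\<in>A. \<exists>b\<in>A. a \<noteq> b \<and> snd (pos lam T (g a)) = snd (pos lam T (g b))")
    case True
    then obtain a b where ab: "a \<in> A" "b \<in> A" "a \<noteq> b" "snd (pos lam T (g a)) = snd (pos lam T (g b))" by blast
    define \<tau> where "\<tau> = transpose (g a) (g b)"
    have gab: "g a \<in> {1..n}" "g b \<in> {1..n}" using ab A gin by auto
    have gne: "g a \<noteq> g b" using ab ginj by (meson injD)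
    have tp: "\<tau> permutes {1..n}" using gab by (simp add: \<tau>_def permutes_swap_id)
    have tcol: "\<forall>y\<in>{1..n}. snd (pos lam T (\<tau> y)) = snd (pos lam T y)"
      using ab(4) by (auto simp: \<tau>_def transpose_def)
    have tC: "\<tau> \<in> ?C" using tp tcol col_group_iff[OF T] by blast
    have tt: "\<tau> \<circ> (\<tau> \<circ> h) = h" for h by (simp add: \<tau>_def comp_assoc[symmetric])
    have sg: "sign \<tau> = -1" using gne by (simp add: \<tau>_def sign_swap_id)
    have tg: "\<tau> (g x) = g (transpose a b x)" for x
      using ginj by (auto simp: \<tau>_def transpose_def dest: injD)
    have fneg: "f (\<tau> \<circ> h) = - f h" if h: "h \<in> ?C" for h
    proof -
      have hp: "h permutes {1..n}" using hperm h by blast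
      have perm: "permutation \<tau>" "permutation h" using tp hp permutation_permutes by blast+
      have s1: "sign (\<tau> \<circ> h) = - sign h" using sign_compose[OF perm] sg by simp
      have "inv (\<tau> \<circ> h) = inv h \<circ> inv \<tau>"
        using o_inv_distrib permutes_bij[OF tp] permutes_bij[OF hp] by blast
      then have "inv (\<tau> \<circ> h) = inv h \<circ> \<tau>" by (simp add: \<tau>_def)
      then have "(\<lambda>x. fst (pos lam T (inv (\<tau> \<circ> h) (g x)))) = (\<lambda>x. (\<lambda>y. fst (pos lam T (inv h (g y)))) (transpose a b x))"
        by (simp add: tg)
      then have "Q (\<lambda>x. fst (pos lam T (inv (\<tau> \<circ> h) (g x)))) = Q (\<lambda>x. fst (pos lam T (inv h (g x))))"
        using Qinv[OF ab(1,2)] by simp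
      then show ?thesis using s1 by (simp add: f_def)
    qed
    have "sum f ?C = sum (\<lambda>h. f (\<tau> \<circ> h)) ?C"
      by (rule sum.reindex_bij_witness[of _ "\<lambda>h. \<tau> \<circ> h" "\<lambda>h. \<tau> \<circ> h"])
         (auto simp: tt intro: col_group_comp[OF T tC])
    also have "\<dots> = - sum f ?C" using fneg by (simp add: sum_negf)
    finally have "sum f ?C = 0" by simp
    then show ?thesis by (simp add: f_def)
  next
    case False
    have "f h = 0" if h: "h \<in> ?C" for h
    proof (rule ccontr)
      assume "f h \<noteq> 0"
      then have Qh: "Q (\<lambda>x. fst (pos lam T (inv h (g x))))" by (simp add: f_def split: if_splits)
      have hp: "h permutes {1..n}" using hperm h by blast
      define F where "F x = snd (pos lam T (inv h (g x)))" for x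
      have Fc: "F x = snd (pos lam T (g x))" if "x \<in> A" for x
        using col_group_inv_col[OF T h gin] that A F_def by auto
      have "inj_on F A"
        using False Fc by (auto simp: inj_on_def)
      moreover have "F ` A \<subseteq> {1..lam!(i-1)}"
      proof
        fix y assume "y \<in> F ` A"
        then obtain x where x: "x \<in> A" "y = F x" by blast
        have iy: "inv h (g x) \<in> {1..n}"
          using permutes_in_image[OF permutes_inv[OF hp]] gin x A by blast
        have c: "pos lam T (inv h (g x)) \<in> cells lam" using pos_in[OF T iy] by simp
        have r: "fst (pos lam T (inv h (g x))) = i \<or> fst (pos lam T (inv h (g x))) = i + 1"
          using Qrng[OF Qh x(1)] by simp
        show "y \<in> {1..lam!(i-1)}"
          using c r ij x(2) unfolding F_def cells_def by (auto split: prod.splits)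
      qed
      ultimately have "card A \<le> card {1..lam!(i-1)}"
        by (intro card_inj_on_le) auto
      then show False using cardA by simp
    qed
    then show ?thesis by (simp add: f_def[symmetric])
  qed
qed


definition Rset :: "nat list \<Rightarrow> nat \<Rightarrow> (nat \<times> nat \<Rightarrow> nat) \<Rightarrow> nat \<Rightarrow> nat set" where
  "Rset lam n S i = {x\<in>{1..n}. fst (pos lam S x) = i}"
definition Jset :: "nat list \<Rightarrow> nat \<Rightarrow> (nat \<times> nat \<Rightarrow> nat) \<Rightarrow> nat \<Rightarrow> nat \<Rightarrow> nat set" where
  "Jset lam n S i j = {x\<in>{1..n}. fst (pos lam S x) = i + 1 \<and> snd (pos lam S x) \<le> j}"
definition QQ :: "nat list \<Rightarrow> nat \<Rightarrow> (nat \<times> nat \<Rightarrow> nat) \<Rightarrow> nat \<Rightarrow> nat set \<Rightarrow> (nat \<Rightarrow> nat) \<Rightarrow> bool" where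
  "QQ lam n S i J' t \<longleftrightarrow> (\<forall>x\<in>{1..n} - (Rset lam n S i \<union> J'). t x = fst (pos lam S x))
     \<and> (\<forall>x\<in>Rset lam n S i \<union> J'. t x = i \<or> t x = i + 1)
     \<and> card {x\<in>Rset lam n S i \<union> J'. t x = i + 1} = card J'"

context
  fixes lam :: "nat list" and n i j :: nat and S :: "nat \<times> nat \<Rightarrow> nat"
  assumes S: "numbering lam n S" and ij: "1 \<le> i" "i < length lam" "1 \<le> j" "j \<le> lam!i"
begin

abbreviation "R \<equiv> Rset lam n S i"
abbreviation "J \<equiv> Jset lam n S i j"
abbreviation "BB \<equiv> {Bc. Bc \<subseteq> {1..lam ! (i - 1)} \<and> card Bc = j}"

lemma R_bij: "bij_betw (\<lambda>c. S (i, c)) {1..lam!(i-1)} R"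
proof -
  have cl: "(i, c) \<in> cells lam" if "c \<in> {1..lam!(i-1)}" for c using that ij by (auto simp: cells_def)
  have inj: "inj_on S (cells lam)" using S by (simp add: numbering_def bij_betw_def)
  show ?thesis unfolding bij_betw_def
  proof
    show "inj_on (\<lambda>c. S (i, c)) {1..lam!(i-1)}"
    proof (rule inj_onI)
      fix x y assume "x \<in> {1..lam!(i-1)}" "y \<in> {1..lam!(i-1)}" "S (i, x) = S (i, y)"
      then have "(i, x) = (i, y)" using inj_onD[OF inj] cl by blast
      then show "x = y" by simp
    qed
    show "(\<lambda>c. S (i, c)) ` {1..lam!(i-1)} = R"
    proof (intro set_eqI iffI)
      fix x assume "x \<in> (\<lambda>c. S (i, c)) ` {1..lam!(i-1)}"
      then obtain c where c: "c \<in> {1..lam!(i-1)}" "x = S (i, c)" by blast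
      then show "x \<in> R" using pos_T[OF S cl[OF c(1)]] T_in[OF S cl[OF c(1)]] by (simp add: Rset_def)
    next
      fix x assume x: "x \<in> R"
      then have xn: "x \<in> {1..n}" and r: "fst (pos lam S x) = i" by (auto simp: Rset_def)
      note pp = pos_in[OF S xn]
      have "snd (pos lam S x) \<in> {1..lam!(i-1)}" using pp(1) r by (auto simp: cells_def)
      moreover have "x = S (i, snd (pos lam S x))" using pp(2) r by (metis prod.collapse)
      ultimately show "x \<in> (\<lambda>c. S (i, c)) ` {1..lam!(i-1)}" by blast
    qed
  qed
qed

lemma J_bij: "bij_betw (\<lambda>c. S (i + 1, c)) {1..j} J"
proof -
  have cl: "(i + 1, c) \<in> cells lam" if "c \<in> {1..j}" for c using that ij by (auto simp: cells_def)
  have inj: "inj_on S (cells lam)" using S by (simp add: numbering_def bij_betw_def)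
  show ?thesis unfolding bij_betw_def
  proof
    show "inj_on (\<lambda>c. S (i + 1, c)) {1..j}"
    proof (rule inj_onI)
      fix x y assume "x \<in> {1..j}" "y \<in> {1..j}" "S (i + 1, x) = S (i + 1, y)"
      then have "(i + 1, x) = (i + 1, y)" using inj_onD[OF inj] cl by blast
      then show "x = y" by simp
    qed
    show "(\<lambda>c. S (i + 1, c)) ` {1..j} = J"
    proof (intro set_eqI iffI)
      fix x assume "x \<in> (\<lambda>c. S (i + 1, c)) ` {1..j}"
      then obtain c where c: "c \<in> {1..j}" "x = S (i + 1, c)" by blast
      then show "x \<in> J" using pos_T[OF S cl[OF c(1)]] T_in[OF S cl[OF c(1)]] by (simp add: Jset_def)
    next
      fix x assume x: "x \<in> J"
      then have xn: "x \<in> {1..n}" and r: "fst (pos lam S x) = i + 1" "snd (pos lam S x) \<le> j" by (auto simp: Jset_def)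
      note pp = pos_in[OF S xn]
      have "snd (pos lam S x) \<in> {1..j}" using pp(1) r by (auto simp: cells_def)
      moreover have "x = S (i + 1, snd (pos lam S x))" using pp(2) r by (metis prod.collapse)
      ultimately show "x \<in> (\<lambda>c. S (i + 1, c)) ` {1..j}" by blast
    qed
  qed
qed

lemma card_R: "card R = lam!(i-1)" using bij_betw_same_card[OF R_bij] by simp
lemma card_J: "card J = j" using bij_betw_same_card[OF J_bij] by simp
lemma R_sub: "R \<subseteq> {1..n}" by (auto simp: Rset_def)
lemma J_sub: "J \<subseteq> {1..n}" by (auto simp: Jset_def)
lemma RJ_disj: "R \<inter> J = {}" by (auto simp: Rset_def Jset_def)
lemma finite_R: "finite R" using R_sub finite_subset by blast
lemma finite_J: "finite J" using J_sub finite_subset by blast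

lemma rowU:
  assumes Bc: "Bc \<in> BB" and x: "x \<in> {1..n}"
  shows "fst (pos lam (xi_move S i Bc) x) =
    (if x \<in> R \<and> snd (pos lam S x) \<in> Bc then i + 1 else if x \<in> J then i else fst (pos lam S x))"
proof -
  have p: "pos lam (xi_move S i Bc) x = phi i Bc (pos lam S x)"
    using xi_numbering(2)[of Bc lam i j n S x] Bc ij S x by auto
  have c: "pos lam S x \<in> cells lam" using pos_in[OF S x] by simp
  obtain r col where rc: "pos lam S x = (r, col)" by force
  have "1 \<le> col" using c rc by (simp add: cells_def)
  then show ?thesis using p rc Bc x by (auto simp: fst_phi Rset_def Jset_def)
qed

definition Bt :: "(nat \<Rightarrow> nat) \<Rightarrow> nat set" where
  "Bt t = {c\<in>{1..lam!(i-1)}. t (S (i, c)) = i + 1}"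

lemma match_Bt:
  assumes Bc: "Bc \<in> BB" and H: "\<forall>x\<in>{1..n}. t x = fst (pos lam (xi_move S i Bc) x)"
  shows "Bc = Bt t"
proof -
  have "c \<in> Bc \<longleftrightarrow> c \<in> Bt t" if c: "c \<in> {1..lam!(i-1)}" for c
  proof -
    have x: "S (i, c) \<in> R" using R_bij c by (auto simp: bij_betw_def)
    have xn: "S (i, c) \<in> {1..n}" using x R_sub by blast
    have cl: "(i, c) \<in> cells lam" using c ij by (auto simp: cells_def)
    have nJ: "S (i, c) \<notin> J" using x RJ_disj by blast
    have "t (S (i, c)) = (if c \<in> Bc then i + 1 else i)"
      using H xn rowU[OF Bc xn] x nJ pos_T[OF S cl] by (simp add: Rset_def)
    then show ?thesis using c by (auto simp: Bt_def)
  qed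
  moreover have "Bc \<subseteq> {1..lam!(i-1)}" "Bt t \<subseteq> {1..lam!(i-1)}" using Bc by (auto simp: Bt_def)
  ultimately show ?thesis by blast
qed

lemma xi_inj: "inj_on (\<lambda>Bc. xi_move S i Bc) BB"
proof (rule inj_onI)
  fix B1 B2 assume B1: "B1 \<in> BB" and B2: "B2 \<in> BB" and E: "xi_move S i B1 = xi_move S i B2"
  let ?t = "\<lambda>x. fst (pos lam (xi_move S i B1) x)"
  have "B1 = Bt ?t" by (rule match_Bt[OF B1]) simp
  moreover have "B2 = Bt ?t" by (rule match_Bt[OF B2]) (simp add: E)
  ultimately show "B1 = B2" by simp
qed

definition Dt :: "(nat \<Rightarrow> nat) \<Rightarrow> nat set" where "Dt t = {x\<in>J. t x = i}"
definition ER :: "(nat \<Rightarrow> nat) \<Rightarrow> nat set" where "ER t = {x\<in>R. t x = i + 1}"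
definition cnd :: "(nat \<Rightarrow> nat) \<Rightarrow> bool" where
  "cnd t \<longleftrightarrow> (\<forall>x\<in>{1..n}. x \<notin> R \<and> x \<notin> J \<longrightarrow> t x = fst (pos lam S x))
     \<and> (\<forall>x\<in>R \<union> J. t x = i \<or> t x = i + 1) \<and> card (ER t) = card (Dt t)"

lemma pos_R:
  assumes "x \<in> R"
  shows "S (i, snd (pos lam S x)) = x"
proof -
  have "x \<in> {1..n}" "fst (pos lam S x) = i" using assms by (auto simp: Rset_def)
  then show ?thesis using pos_in(2)[OF S] by (metis prod.collapse)
qed

lemma card_Bt: "card (Bt t) = card (ER t)"
proof -
  have "bij_betw (\<lambda>c. S (i, c)) (Bt t) (ER t)"
  proof -
    have "(\<lambda>c. S (i, c)) ` Bt t = ER t"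
    proof (intro set_eqI iffI)
      fix x assume "x \<in> (\<lambda>c. S (i, c)) ` Bt t"
      then obtain c where c: "c \<in> Bt t" "x = S (i, c)" by blast
      then have "c \<in> {1..lam!(i-1)}" by (simp add: Bt_def)
      then have "x \<in> R" using R_bij c(2) by (auto simp: bij_betw_def)
      then show "x \<in> ER t" using c by (simp add: ER_def Bt_def)
    next
      fix x assume x: "x \<in> ER t"
      then have "x \<in> R" by (simp add: ER_def)
      then obtain c where c: "c \<in> {1..lam!(i-1)}" "x = S (i, c)" using R_bij unfolding bij_betw_def by (metis imageE)
      then have "c \<in> Bt t" using x by (simp add: ER_def Bt_def)
      then show "x \<in> (\<lambda>c. S (i, c)) ` Bt t" using c by blast
    qed
    moreover have "inj_on (\<lambda>c. S (i, c)) (Bt t)"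
      using R_bij unfolding bij_betw_def Bt_def by (auto intro: inj_on_subset)
    ultimately show ?thesis by (simp add: bij_betw_def)
  qed
  then show ?thesis by (rule bij_betw_same_card)
qed

lemma claim1:
  "(Bt t \<in> BB \<and> (\<forall>x\<in>{1..n}. t x = fst (pos lam (xi_move S i (Bt t)) x)))
    \<longleftrightarrow> cnd t \<and> Dt t = J"
proof
  assume A: "Bt t \<in> BB \<and> (\<forall>x\<in>{1..n}. t x = fst (pos lam (xi_move S i (Bt t)) x))"
  then have B: "Bt t \<in> BB" and H: "\<And>x. x \<in> {1..n} \<Longrightarrow> t x =
    (if x \<in> R \<and> snd (pos lam S x) \<in> Bt t then i + 1 else if x \<in> J then i else fst (pos lam S x))"
    using rowU by auto
  have out: "\<forall>x\<in>{1..n}. x \<notin> R \<and> x \<notin> J \<longrightarrow> t x = fst (pos lam S x)" using H by auto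
  have HJ: "t x = i" if "x \<in> J" for x
  proof -
    have "x \<notin> R" "x \<in> {1..n}" using that RJ_disj J_sub by auto
    then show ?thesis using H that by simp
  qed
  have HR: "t x = i \<or> t x = i + 1" if "x \<in> R" for x
  proof -
    have "x \<notin> J" "x \<in> {1..n}" "fst (pos lam S x) = i" using that RJ_disj R_sub by (auto simp: Rset_def)
    then show ?thesis using H that by simp
  qed
  have rng: "\<forall>x\<in>R \<union> J. t x = i \<or> t x = i + 1" using HJ HR by blast
  have D: "Dt t = J" using HJ by (auto simp: Dt_def)
  have "card (ER t) = card (Dt t)" using card_Bt B D card_J by simp
  then show "cnd t \<and> Dt t = J" using out rng D by (simp add: cnd_def)
next
  assume A: "cnd t \<and> Dt t = J"
  then have out: "\<forall>x\<in>{1..n}. x \<notin> R \<and> x \<notin> J \<longrightarrow> t x = fst (pos lam S x)"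
    and rng: "\<forall>x\<in>R \<union> J. t x = i \<or> t x = i + 1" and cd: "card (ER t) = card (Dt t)"
    and D: "Dt t = J" by (auto simp: cnd_def)
  have B: "Bt t \<in> BB" using card_Bt cd D card_J by (auto simp: Bt_def)
  have "t x = fst (pos lam (xi_move S i (Bt t)) x)" if x: "x \<in> {1..n}" for x
  proof -
    have e: "fst (pos lam (xi_move S i (Bt t)) x) =
      (if x \<in> R \<and> snd (pos lam S x) \<in> Bt t then i + 1 else if x \<in> J then i else fst (pos lam S x))"
      using rowU[OF B x] .
    show ?thesis
    proof (cases "x \<in> R")
      case True
      have pr: "S (i, snd (pos lam S x)) = x" using pos_R[OF True] .
      have sr: "snd (pos lam S x) \<in> {1..lam!(i-1)}"
        using pos_in(1)[OF S x] True by (auto simp: cells_def Rset_def)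
      have "snd (pos lam S x) \<in> Bt t \<longleftrightarrow> t x = i + 1" using pr sr by (simp add: Bt_def)
      moreover have "x \<notin> J" using True RJ_disj by blast
      moreover have "fst (pos lam S x) = i" using True by (simp add: Rset_def)
      ultimately show ?thesis using e rng True by auto
    next
      case False
      then show ?thesis using e out x D by (auto simp: Dt_def)
    qed
  qed
  then show "Bt t \<in> BB \<and> (\<forall>x\<in>{1..n}. t x = fst (pos lam (xi_move S i (Bt t)) x))" using B by blast
qed

lemma claim2:
  "(\<forall>x\<in>{1..n}. t x = fst (pos lam S x)) \<longleftrightarrow> cnd t \<and> Dt t = {}"
proof
  assume H: "\<forall>x\<in>{1..n}. t x = fst (pos lam S x)"
  have D: "Dt t = {}" using H J_sub by (auto simp: Dt_def Jset_def)
  have E: "ER t = {}" using H R_sub by (auto simp: ER_def Rset_def)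
  show "cnd t \<and> Dt t = {}" using H D E R_sub J_sub by (auto simp: cnd_def Rset_def Jset_def)
next
  assume A: "cnd t \<and> Dt t = {}"
  then have out: "\<forall>x\<in>{1..n}. x \<notin> R \<and> x \<notin> J \<longrightarrow> t x = fst (pos lam S x)"
    and rng: "\<forall>x\<in>R \<union> J. t x = i \<or> t x = i + 1" and cd: "card (ER t) = 0"
    and D: "Dt t = {}" by (auto simp: cnd_def)
  have fE: "finite (ER t)" using finite_R by (simp add: ER_def)
  then have E: "ER t = {}" using cd by simp
  show "\<forall>x\<in>{1..n}. t x = fst (pos lam S x)"
  proof
    fix x assume x: "x \<in> {1..n}"
    show "t x = fst (pos lam S x)"
    proof (cases "x \<in> R")
      case True
      then show ?thesis using rng E by (auto simp: ER_def Rset_def)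
    next
      case False
      show ?thesis
      proof (cases "x \<in> J")
        case True
        then show ?thesis using rng D by (auto simp: Dt_def Jset_def)
      next
        case False2: False
        then show ?thesis using out x False by blast
      qed
    qed
  qed
qed

lemma claim3:
  assumes J': "J' \<subseteq> J"
  shows "QQ lam n S i J' t \<longleftrightarrow> cnd t \<and> Dt t \<subseteq> J'"
proof -
  have fJ': "finite J'" using J' finite_J finite_subset by blast
  have key: "{x\<in>R \<union> J'. t x = i + 1} = ER t \<union> (J' - Dt t)"
    if rng: "\<forall>x\<in>R \<union> J'. t x = i \<or> t x = i + 1" 
    using rng J' by (auto simp: ER_def Dt_def)
  have disj: "ER t \<inter> (J' - Dt t) = {}" using RJ_disj J' by (auto simp: ER_def)
  have fE: "finite (ER t)" using finite_R by (simp add: ER_def)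
  have cardkey: "card {x\<in>R \<union> J'. t x = i + 1} = card (ER t) + (card J' - card (Dt t))"
    if rng: "\<forall>x\<in>R \<union> J'. t x = i \<or> t x = i + 1" and DJ: "Dt t \<subseteq> J'"
  proof -
    have "card {x\<in>R \<union> J'. t x = i + 1} = card (ER t) + card (J' - Dt t)"
      using key[OF rng] disj fE fJ' by (simp add: card_Un_disjoint)
    also have "card (J' - Dt t) = card J' - card (Dt t)" using DJ fJ' by (simp add: card_Diff_subset finite_subset)
    finally show ?thesis .
  qed
  show ?thesis
  proof
    assume Q: "QQ lam n S i J' t"
    then have o: "\<forall>x\<in>{1..n} - (R \<union> J'). t x = fst (pos lam S x)"
      and r: "\<forall>x\<in>R \<union> J'. t x = i \<or> t x = i + 1"
      and c: "card {x\<in>R \<union> J'. t x = i + 1} = card J'" by (auto simp: QQ_def)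
    have JJ: "t x = i + 1" if "x \<in> J - J'" for x
    proof -
      have "x \<in> {1..n} - (R \<union> J')" using that J_sub RJ_disj by auto
      then have "t x = fst (pos lam S x)" using o by blast
      then show ?thesis using that by (simp add: Jset_def)
    qed
    have out: "\<forall>x\<in>{1..n}. x \<notin> R \<and> x \<notin> J \<longrightarrow> t x = fst (pos lam S x)" using o J' by auto
    have rng: "\<forall>x\<in>R \<union> J. t x = i \<or> t x = i + 1" using r JJ by blast
    have DJ: "Dt t \<subseteq> J'"
    proof
      fix x assume x: "x \<in> Dt t"
      show "x \<in> J'"
      proof (rule ccontr)
        assume nx: "x \<notin> J'"
        have xJ: "x \<in> J" "t x = i" using x by (auto simp: Dt_def)
        then have "t x = i + 1" using JJ[of x] nx by blast
        then show False using xJ by simp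
      qed
    qed
    have "card (Dt t) \<le> card J'" using DJ fJ' card_mono by blast
    then have "card (ER t) = card (Dt t)" using cardkey[OF r DJ] c by simp
    then show "cnd t \<and> Dt t \<subseteq> J'" using out rng DJ by (simp add: cnd_def)
  next
    assume A: "cnd t \<and> Dt t \<subseteq> J'"
    then have out: "\<forall>x\<in>{1..n}. x \<notin> R \<and> x \<notin> J \<longrightarrow> t x = fst (pos lam S x)"
      and rng: "\<forall>x\<in>R \<union> J. t x = i \<or> t x = i + 1" and cd: "card (ER t) = card (Dt t)"
      and DJ: "Dt t \<subseteq> J'" by (auto simp: cnd_def)
    have r: "\<forall>x\<in>R \<union> J'. t x = i \<or> t x = i + 1" using rng J' by blast
    have o: "\<forall>x\<in>{1..n} - (R \<union> J'). t x = fst (pos lam S x)"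
    proof
      fix x assume x: "x \<in> {1..n} - (R \<union> J')"
      show "t x = fst (pos lam S x)"
      proof (cases "x \<in> J")
        case True
        then have "x \<notin> Dt t" using x DJ by blast
        then have "t x = i + 1" using rng True by (auto simp: Dt_def)
        then show ?thesis using True by (simp add: Jset_def)
      next
        case False
        then show ?thesis using out x by blast
      qed
    qed
    have "card (Dt t) \<le> card J'" using DJ fJ' card_mono by blast
    then have "card {x\<in>R \<union> J'. t x = i + 1} = card J'" using cardkey[OF r DJ] cd by simp
    then show "QQ lam n S i J' t" using o r by (simp add: QQ_def)
  qed
qed


lemma QQ_swap1:
  assumes ab: "a \<in> R \<union> J'" "b \<in> R \<union> J'" and J': "J' \<subseteq> J" and Q: "QQ lam n S i J' t"
  shows "QQ lam n S i J' (\<lambda>x. t (transpose a b x))"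
proof -
  let ?A = "R \<union> J'"
  let ?tr = "transpose a b"
  have o: "\<forall>x\<in>{1..n} - ?A. t x = fst (pos lam S x)"
    and r: "\<forall>x\<in>?A. t x = i \<or> t x = i + 1"
    and c: "card {x\<in>?A. t x = i + 1} = card J'" using Q by (auto simp: QQ_def)
  have trA: "?tr x \<in> ?A" if "x \<in> ?A" for x using that ab by (auto simp: transpose_def)
  have o': "\<forall>x\<in>{1..n} - ?A. t (?tr x) = fst (pos lam S x)"
  proof
    fix x assume x: "x \<in> {1..n} - ?A"
    then have "x \<noteq> a" "x \<noteq> b" using ab by auto
    then show "t (?tr x) = fst (pos lam S x)" using o x by simp
  qed
  have r': "\<forall>x\<in>?A. t (?tr x) = i \<or> t (?tr x) = i + 1" using r trA by blast
  have "{x\<in>?A. t (?tr x) = i + 1} = ?tr ` {y\<in>?A. t y = i + 1}"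
  proof (intro set_eqI iffI)
    fix x assume "x \<in> {x\<in>?A. t (?tr x) = i + 1}"
    then have "?tr x \<in> {y\<in>?A. t y = i + 1}" "x = ?tr (?tr x)" using trA by auto
    then show "x \<in> ?tr ` {y\<in>?A. t y = i + 1}" by blast
  next
    fix x assume "x \<in> ?tr ` {y\<in>?A. t y = i + 1}"
    then obtain y where "y \<in> ?A" "t y = i + 1" "x = ?tr y" by blast
    then show "x \<in> {x\<in>?A. t (?tr x) = i + 1}" using trA by auto
  qed
  then have c': "card {x\<in>?A. t (?tr x) = i + 1} = card J'"
    using c by (simp add: card_image)
  show ?thesis using o' r' c' by (simp add: QQ_def)
qed

lemma QQ_swap:
  assumes ab: "a \<in> R \<union> J'" "b \<in> R \<union> J'" and J': "J' \<subseteq> J"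
  shows "QQ lam n S i J' (\<lambda>x. t (transpose a b x)) = QQ lam n S i J' t"
proof
  assume "QQ lam n S i J' (\<lambda>x. t (transpose a b x))"
  from QQ_swap1[OF ab J' this] show "QQ lam n S i J' t" by simp
next
  assume "QQ lam n S i J' t"
  from QQ_swap1[OF ab J' this] show "QQ lam n S i J' (\<lambda>x. t (transpose a b x))" .
qed

lemma QQ_rng: "QQ lam n S i J' t \<Longrightarrow> x \<in> R \<union> J' \<Longrightarrow> t x = i \<or> t x = i + 1"
  by (simp add: QQ_def)

lemma sum_Xi:
  "(\<Sum>U\<in>Xi lam i j S. rowmatch lam n t U) = (if cnd t \<and> Dt t = J then 1 else 0)"
proof -
  have fBB: "finite BB" by (rule finite_subset[of _ "Pow {1..lam!(i-1)}"]) auto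
  have "(\<Sum>U\<in>Xi lam i j S. rowmatch lam n t U) = (\<Sum>Bc\<in>BB. rowmatch lam n t (xi_move S i Bc))"
    unfolding Xi_def by (rule sum.reindex[OF xi_inj, unfolded comp_def])
  also have "\<dots> = (\<Sum>Bc\<in>BB. if Bc = Bt t then rowmatch lam n t (xi_move S i (Bt t)) else 0)"
  proof (rule sum.cong[OF refl])
    fix Bc assume Bc: "Bc \<in> BB"
    show "rowmatch lam n t (xi_move S i Bc) = (if Bc = Bt t then rowmatch lam n t (xi_move S i (Bt t)) else 0)"
      using match_Bt[OF Bc] by (auto simp: rowmatch_def)
  qed
  also have "\<dots> = (if Bt t \<in> BB then rowmatch lam n t (xi_move S i (Bt t)) else 0)"
    using fBB by simp
  also have "\<dots> = (if cnd t \<and> Dt t = J then 1 else 0)"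
    using claim1[of t] by (auto simp: rowmatch_def)
  finally show ?thesis .
qed

definition Gt :: "(nat \<Rightarrow> nat) \<Rightarrow> complex" where
  "Gt t = (-1) ^ j * (\<Sum>U\<in>Xi lam i j S. rowmatch lam n t U) - rowmatch lam n t S"

lemma Gt_identity:
  "Gt t = (\<Sum>J'\<in>{J'. J' \<subseteq> J \<and> J' \<noteq> {}}. (-1) ^ card J' * (if QQ lam n S i J' t then 1 else 0))"
proof -
  have P: "{J'. J' \<subseteq> J \<and> J' \<noteq> {}} = Pow J - {{}}" by auto
  have fP: "finite (Pow J)" using finite_J by simp
  have "(\<Sum>J'\<in>{J'. J' \<subseteq> J \<and> J' \<noteq> {}}. (-1) ^ card J' * (if QQ lam n S i J' t then 1 else 0))
      = (\<Sum>J'\<in>{J'. J' \<subseteq> J \<and> J' \<noteq> {}}. (-1) ^ card J' * (if cnd t \<and> Dt t \<subseteq> J' then 1 else (0::complex)))"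
    by (rule sum.cong[OF refl]) (simp add: claim3)
  also have "\<dots> = (if cnd t then (if Dt t = J then (-1) ^ j else 0) - (if Dt t = {} then 1 else 0) else 0)"
  proof (cases "cnd t")
    case False
    then show ?thesis by simp
  next
    case True
    have DJ: "Dt t \<subseteq> J" by (auto simp: Dt_def)
    have "(\<Sum>J'\<in>Pow J. (-1) ^ card J' * (if Dt t \<subseteq> J' then 1 else (0::complex)))
        = (\<Sum>J'\<in>{Y\<in>Pow J. Dt t \<subseteq> Y}. (-1) ^ card J')"
    proof -
      have "(\<Sum>J'\<in>Pow J. (-1) ^ card J' * (if Dt t \<subseteq> J' then 1 else (0::complex)))
          = (\<Sum>J'\<in>Pow J. if Dt t \<subseteq> J' then (-1) ^ card J' else 0)"
        by (rule sum.cong) auto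
      also have "\<dots> = (\<Sum>J'\<in>{Y\<in>Pow J. Dt t \<subseteq> Y}. (-1) ^ card J')"
        by (rule sum.inter_filter[OF fP, symmetric])
      finally show ?thesis .
    qed
    also have "\<dots> = (if Dt t = J then (-1) ^ j else 0)"
    proof (cases "Dt t = J")
      case True
      then have "{Y\<in>Pow J. Dt t \<subseteq> Y} = {J}" by auto
      then show ?thesis using True card_J by simp
    next
      case False
      then have sub: "Dt t \<subset> J" using DJ by blast
      have "(\<Sum>Y\<in>{Y. Y \<subseteq> J \<and> Dt t \<subseteq> Y}. (-1) ^ card Y) = (0::complex)"
        apply (rule sum_alternating_cancels)
        using fP apply (simp add: finite_subset)
        using card_subsupersets_even_odd[OF finite_J sub] by (simp add: conj_assoc)
      moreover have "{Y\<in>Pow J. Dt t \<subseteq> Y} = {Y. Y \<subseteq> J \<and> Dt t \<subseteq> Y}" by auto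
      ultimately show ?thesis using False by simp
    qed
    finally have A: "(\<Sum>J'\<in>Pow J. (-1) ^ card J' * (if Dt t \<subseteq> J' then 1 else (0::complex)))
        = (if Dt t = J then (-1) ^ j else 0)" .
    have "(\<Sum>J'\<in>Pow J - {{}}. (-1) ^ card J' * (if Dt t \<subseteq> J' then 1 else (0::complex)))
       = (\<Sum>J'\<in>Pow J. (-1) ^ card J' * (if Dt t \<subseteq> J' then 1 else (0::complex))) - (if Dt t = {} then 1 else 0)"
      using fP by (simp add: sum_diff1)
    then show ?thesis using A True P by simp
  qed
  also have "\<dots> = Gt t"
  proof -
    have Jne: "J \<noteq> {}" using card_J ij by auto
    show ?thesis
      unfolding Gt_def sum_Xi using claim2[of t] Jne by (auto simp: rowmatch_def)
  qed
  finally show ?thesis by simp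
qed

lemma Gt_vanish:
  assumes T: "numbering lam n T" and g: "g \<in> Sym n" and srt: "lam!i \<le> lam!(i-1)"
  shows "(\<Sum>h\<in>col_group n lam T. of_int (sign h) * Gt (\<lambda>x. fst (pos lam T (inv h (g x))))) = 0"
proof -
  let ?C = "col_group n lam T"
  let ?P = "{J'. J' \<subseteq> J \<and> J' \<noteq> {}}"
  have zero: "(\<Sum>h\<in>?C. of_int (sign h) * (if QQ lam n S i J' (\<lambda>x. fst (pos lam T (inv h (g x)))) then 1 else 0)) = (0::complex)"
    if J': "J' \<in> ?P" for J'
  proof (rule garnir_vanish[OF T g])
    have fJ': "finite J'" using J' finite_J finite_subset by blast
    have disj: "R \<inter> J' = {}" using J' RJ_disj by blast
    show "R \<union> J' \<subseteq> {1..n}" using J' R_sub J_sub by blast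
    have "card (R \<union> J') = lam!(i-1) + card J'" using card_R fJ' finite_R disj by (simp add: card_Un_disjoint)
    moreover have "card J' > 0" using J' fJ' by auto
    ultimately show "card (R \<union> J') > lam!(i-1)" by simp
    show "1 \<le> i" "i < length lam" "lam!i \<le> lam!(i-1)" using ij srt by auto
    show "\<And>t a b. a \<in> R \<union> J' \<Longrightarrow> b \<in> R \<union> J' \<Longrightarrow> QQ lam n S i J' (\<lambda>x. t (transpose a b x)) = QQ lam n S i J' t"
      using QQ_swap J' by blast
    show "\<And>t x. QQ lam n S i J' t \<Longrightarrow> x \<in> R \<union> J' \<Longrightarrow> t x = i \<or> t x = i + 1"
      using QQ_rng by blast
  qed
  have "(\<Sum>h\<in>?C. of_int (sign h) * Gt (\<lambda>x. fst (pos lam T (inv h (g x)))))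
     = (\<Sum>h\<in>?C. \<Sum>J'\<in>?P. (-1) ^ card J' * (of_int (sign h) * (if QQ lam n S i J' (\<lambda>x. fst (pos lam T (inv h (g x)))) then 1 else 0)))"
    by (simp add: Gt_identity sum_distrib_left mult.left_commute)
  also have "\<dots> = (\<Sum>J'\<in>?P. (-1) ^ card J' * (\<Sum>h\<in>?C. of_int (sign h) * (if QQ lam n S i J' (\<lambda>x. fst (pos lam T (inv h (g x)))) then 1 else 0)))"
    by (subst sum.swap) (simp add: sum_distrib_left)
  also have "\<dots> = 0" using zero by simp
  finally show ?thesis .
qed

end


lemma ga_mult_lin:
  assumes "finite I"
  shows "ga_mult n y (\<lambda>k. c * (\<Sum>u\<in>I. f u k) - f0 k) g = c * (\<Sum>u\<in>I. ga_mult n y (f u) g) - ga_mult n y f0 g"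
proof (cases "g \<in> Sym n")
  case True
  have "(\<Sum>h\<in>Sym n. y h * (c * (\<Sum>u\<in>I. f u (inv h \<circ> g)) - f0 (inv h \<circ> g)))
      = (\<Sum>h\<in>Sym n. c * (\<Sum>u\<in>I. y h * f u (inv h \<circ> g))) - (\<Sum>h\<in>Sym n. y h * f0 (inv h \<circ> g))"
    by (simp add: right_diff_distrib sum_subtractf sum_distrib_left mult.left_commute)
  also have "(\<Sum>h\<in>Sym n. c * (\<Sum>u\<in>I. y h * f u (inv h \<circ> g))) = c * (\<Sum>u\<in>I. \<Sum>h\<in>Sym n. y h * f u (inv h \<circ> g))"
    by (simp add: sum_distrib_left[symmetric] sum.swap[of _ "Sym n"])
  finally have calc: "(\<Sum>h\<in>Sym n. y h * (c * (\<Sum>u\<in>I. f u (inv h \<circ> g)) - f0 (inv h \<circ> g)))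
     = c * (\<Sum>u\<in>I. \<Sum>h\<in>Sym n. y h * f u (inv h \<circ> g)) - (\<Sum>h\<in>Sym n. y h * f0 (inv h \<circ> g))" .
  show ?thesis unfolding ga_mult_def if_P[OF True] by (rule calc)
qed (simp add: ga_mult_def)

theorem proposition2p15:
  fixes lam :: "nat list" and n i j :: nat and S T :: "nat \<times> nat \<Rightarrow> nat"
  assumes "is_partition lam n"
    and "numbering lam n S" and "numbering lam n T"
    and "1 \<le> i" and "i \<le> length lam - 1"
    and "1 \<le> j" and "j \<le> lam ! i"
  shows "(\<lambda>g. (-1) ^ j * piT n lam T i j S g
              - ga_mult n (delta (sigma n lam S T)) (a_elt n lam S) g) \<in> ker_Psi n lam T"
proof -
  note S = assms(2) and T = assms(3)
  have il: "i < length lam" using assms(4,5) by linarith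
  have srt: "lam!i \<le> lam!(i-1)"
  proof -
    have "sorted_wrt (\<ge>) lam" using assms(1) by (simp add: is_partition_def)
    moreover have "i - 1 < i" "i < length lam" using assms(4) il by auto
    ultimately show ?thesis using sorted_wrt_nth_less by fastforce
  qed
  note ctx = S assms(4) il assms(6,7)
  have XiN: "numbering lam n U" if "U \<in> Xi lam i j S" for U
    using that xi_numbering(1)[OF _ _ assms(4) il assms(7) S] by (auto simp: Xi_def)
  have finXi: "finite (Xi lam i j S)"
  proof -
    have "finite {Bc. Bc \<subseteq> {1..lam ! (i - 1)} \<and> card Bc = j}"
      by (rule finite_subset[of _ "Pow {1..lam!(i-1)}"]) auto
    then show ?thesis by (simp add: Xi_def)
  qed
  define z where "z = (\<lambda>g. (-1) ^ j * piT n lam T i j S g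
              - ga_mult n (delta (sigma n lam S T)) (a_elt n lam S) g)"
  have Zg: "z g = Gt lam n i j S (\<lambda>x. fst (pos lam T (g x)))" if g: "g \<in> Sym n" for g
  proof -
    have "piT n lam T i j S g = (\<Sum>U\<in>Xi lam i j S. rowmatch lam n (\<lambda>x. fst (pos lam T (g x))) U)"
      unfolding piT_def by (rule sum.cong[OF refl]) (simp add: term_left[OF XiN T g])
    then show ?thesis unfolding z_def Gt_def[OF ctx] using term_left[OF S T g] by simp
  qed
  have Z0: "z g = 0" if "g \<notin> Sym n" for g
    using that by (simp add: z_def piT_def ga_mult_def)
  define x where "x = (\<lambda>k. (-1) ^ j * (\<Sum>U\<in>Xi lam i j S. delta (sigma n lam U T) k) - delta (sigma n lam S T) k)"
  have xga: "x \<in> ga n"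
  proof -
    have "delta (sigma n lam U T) k = 0" if "k \<notin> Sym n" "numbering lam n U" for U k
      using sigma_in_Sym[OF that(2) T] that(1) by (auto simp: delta_def)
    then show ?thesis using XiN S by (auto simp: ga_def x_def)
  qed
  have zM: "z = ga_mult n (a_elt n lam T) x"
  proof
    fix g
    show "z g = ga_mult n (a_elt n lam T) x g"
    proof (cases "g \<in> Sym n")
      case True
      have "ga_mult n (a_elt n lam T) x g = (-1) ^ j * (\<Sum>U\<in>Xi lam i j S. ga_mult n (a_elt n lam T) (delta (sigma n lam U T)) g)
          - ga_mult n (a_elt n lam T) (delta (sigma n lam S T)) g"
        unfolding x_def by (rule ga_mult_lin[OF finXi])
      also have "\<dots> = Gt lam n i j S (\<lambda>x. fst (pos lam T (g x)))"
        unfolding Gt_def[OF ctx] using term_right[OF S T True] term_right[OF XiN T True] by simp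
      finally show ?thesis using Zg[OF True] by simp
    next
      case False
      then show ?thesis using Z0 by (simp add: ga_mult_def)
    qed
  qed
  have inM: "z \<in> Mmod n lam T" using zM xga by (auto simp: Mmod_def)
  have Psi0: "ga_mult n (b_elt n lam T) z g = 0" for g
  proof (cases "g \<in> Sym n")
    case True
    have CS: "col_group n lam T \<subseteq> Sym n" by (auto simp: col_group_def)
    have fS: "finite (Sym n)" by (rule finite_Sym)
    have "ga_mult n (b_elt n lam T) z g = (\<Sum>h\<in>Sym n. b_elt n lam T h * z (inv h \<circ> g))"
      using True by (simp add: ga_mult_def)
    also have "\<dots> = (\<Sum>h\<in>Sym n. if h \<in> col_group n lam T then of_int (sign h) * z (inv h \<circ> g) else 0)"
      by (rule sum.cong) (auto simp: b_elt_def)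
    also have "\<dots> = (\<Sum>h\<in>{h\<in>Sym n. h \<in> col_group n lam T}. of_int (sign h) * z (inv h \<circ> g))"
      by (rule sum.inter_filter[OF fS, symmetric])
    also have "{h\<in>Sym n. h \<in> col_group n lam T} = col_group n lam T" using CS by blast
    also have "(\<Sum>h\<in>col_group n lam T. of_int (sign h) * z (inv h \<circ> g))
        = (\<Sum>h\<in>col_group n lam T. of_int (sign h) * Gt lam n i j S (\<lambda>x. fst (pos lam T (inv h (g x)))))"
    proof (rule sum.cong[OF refl])
      fix h assume h: "h \<in> col_group n lam T"
      have "inv h \<circ> g \<in> Sym n" using h True CS
        by (auto simp: Sym_def intro!: permutes_compose permutes_inv)
      then show "of_int (sign h) * z (inv h \<circ> g) = of_int (sign h) * Gt lam n i j S (\<lambda>x. fst (pos lam T (inv h (g x))))"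
        using Zg by simp
    qed
    also have "\<dots> = 0" by (rule Gt_vanish[OF ctx T True srt])
    finally show ?thesis .
  next
    case False
    then show ?thesis by (simp add: ga_mult_def)
  qed
  show ?thesis
    using inM Psi0 unfolding z_def[symmetric] by (auto simp: ker_Psi_def Psi_def)
qed

end
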